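(* Let $A$ and $B$ be real symmetric $n\times n$ matrices. Let $\lambda_1$ be the eigenvalue of $A$ of largest absolute value, assumed to have multiplicity one, and let $\lambda_2$ be an eigenvalue of $A$ of second-largest absolute value. Let $\mu_1$ be an eigenvalue of $B$ of largest absolute value (so $\|A\|=|\lambda_1|$, $\|B\|=|\mu_1|$). Suppose $\kappa\in[0,1)$ satisfies $|\lambda_2|\le \kappa|\lambda_1|$, let $\eta=\|A-B\|$, and assume $|\mu_1|-\eta\ge \kappa|\lambda_1|$. Let $v(A)$ and $v(B)$ be unit eigenvectors of $A$ and $B$ associated with $\lambda_1$ and $\mu_1$ respectively, with signs chosen so that $v(A)\cdot v(B)\ge 0$. Then $$\|v(A)-v(B)\|^2\le 2\left(1-\frac{1}{|\lambda_1|}\sqrt{\frac{(|\mu_1|-\eta)^2-\lambda_1^2\kappa^2}{1-\kappa^2}}\right).$$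
   Context: $\|\cdot\|$ denotes the Euclidean norm on vectors and the associated spectral norm on matrices. *)

theory Defs
  imports "HOL-Analysis.Analysis"
begin

definition symmetric_matrix :: "real^'n^'n \<Rightarrow> bool" where
  "symmetric_matrix A \<longleftrightarrow> transpose A = A"

definition is_eigenvalue :: "real^'n^'n \<Rightarrow> real \<Rightarrow> bool" where
  "is_eigenvalue A l \<longleftrightarrow> (\<exists>v. v \<noteq> 0 \<and> A *v v = l *\<^sub>R v)"

definition eigenspace :: "real^'n^'n \<Rightarrow> real \<Rightarrow> (real^'n) set" where
  "eigenspace A l = {v. A *v v = l *\<^sub>R v}"

definition spec_norm :: "real^'n^'n \<Rightarrow> real" where
  "spec_norm A = onorm (\<lambda>x. A *v x)"

end

theory Submission
  imports Defs
begin

lemma sym_inner: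
  fixes A :: "real^'n^'n"
  assumes "symmetric_matrix A"
  shows "(A *v x) \<bullet> y = x \<bullet> (A *v y)"
proof -
  have "x \<bullet> (A *v y) = (x v* A) \<bullet> y" by (simp add: dot_lmul_matrix)
  also have "x v* A = transpose A *v x" by simp
  also have "transpose A = A" using assms by (simp add: symmetric_matrix_def)
  finally show ?thesis by simp
qed

lemma perturb_zero:
  fixes p C :: real
  assumes "\<And>t. 2 * t * p + t^2 * C \<le> 0"
  shows "p = 0"
proof (rule ccontr)
  assume "p \<noteq> 0"
  define D where "D = \<bar>C\<bar> + 1"
  have D: "D > 0" unfolding D_def by simp
  have "2 * (p/D) * p + (p/D)^2 * C \<le> 0" by (rule assms)
  hence "D^2 * (2 * (p/D) * p + (p/D)^2 * C) \<le> 0"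
    by (simp add: mult_nonneg_nonpos)
  moreover have "D^2 * (2 * (p/D) * p + (p/D)^2 * C) = p^2 * (2*D + C)"
    using D by (simp add: field_simps power2_eq_square)
  moreover have "2*D + C > 0" unfolding D_def by (simp add: abs_if)
  moreover have "p^2 > 0" using \<open>p \<noteq> 0\<close> by simp
  ultimately show False by (smt (verit) mult_pos_pos)
qed

lemma restricted_bound:
  fixes A :: "real^'n^'n" and v :: "real^'n" and K :: real
  assumes sym: "symmetric_matrix A"
    and inv: "\<And>x. x \<bullet> v = 0 \<Longrightarrow> (A *v x) \<bullet> v = 0"
    and H: "\<And>y l. y \<noteq> 0 \<Longrightarrow> y \<bullet> v = 0 \<Longrightarrow> A *v y = l *\<^sub>R y \<Longrightarrow> \<bar>l\<bar> \<le> K"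
    and K: "K \<ge> 0"
    and w: "w \<bullet> v = 0"
  shows "norm (A *v w) \<le> K * norm w"
proof (cases "w = 0")
  case True then show ?thesis by simp
next
  case False
  define S where "S = {x::real^'n. norm x = 1 \<and> x \<bullet> v = 0}"
  define f where "f = (\<lambda>x::real^'n. (norm (A *v x))^2)"
  have "S = sphere 0 1 \<inter> {x. x \<bullet> v = 0}" unfolding S_def by auto
  moreover have "closed {x::real^'n. x \<bullet> v = 0}"
    by (intro closed_Collect_eq continuous_intros)
  ultimately have cS: "compact S" by (simp add: compact_Int_closed)
  have wS: "w /\<^sub>R norm w \<in> S" using False w unfolding S_def by (simp add: inner_commute)
  hence neS: "S \<noteq> {}" by auto
  have cf: "continuous_on S f" unfolding f_def by (intro continuous_intros)
  obtain u where uS: "u \<in> S" and umax: "\<And>x. x \<in> S \<Longrightarrow> f x \<le> f u"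
    using continuous_attains_sup[OF cS neS cf] by blast
  define M where "M = f u"
  have u1: "norm u = 1" and uv: "u \<bullet> v = 0" using uS unfolding S_def by auto
  have uu: "u \<bullet> u = 1" using u1 by (simp add: norm_eq_1)
  have fhom: "f (c *\<^sub>R x) = c^2 * f x" for c x
    unfolding f_def by (simp add: matrix_vector_mult_scaleR power_mult_distrib)
  have fle: "f x \<le> M * (norm x)^2" if "x \<bullet> v = 0" for x
  proof (cases "x = 0")
    case True then show ?thesis unfolding f_def by simp
  next
    case False
    have "x /\<^sub>R norm x \<in> S" using False that unfolding S_def by simp
    hence "f (x /\<^sub>R norm x) \<le> M" using umax M_def by simp
    hence "(1/norm x)^2 * f x \<le> M" using fhom[of "1/norm x" x] by (simp add: divide_inverse)
    hence "f x \<le> M * (norm x)^2" using False by (simp add: field_simps)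
    thus ?thesis .
  qed
  define g where "g = A *v (A *v u)"
  have hg: "h \<bullet> g = 0" if hv: "h \<bullet> v = 0" and hu: "h \<bullet> u = 0" for h
  proof -
    define p where "p = h \<bullet> g"
    define C where "C = f h - M * (norm h)^2"
    have "2 * t * p + t^2 * C \<le> 0" for t
    proof -
      have xv: "(u + t *\<^sub>R h) \<bullet> v = 0" using uv hv by (simp add: inner_add_left)
      have n: "(norm (u + t *\<^sub>R h))^2 = 1 + t^2 * (norm h)^2"
        using uu hu unfolding power2_norm_eq_inner
        by (simp add: inner_add_left inner_add_right inner_commute power2_eq_square)
      have cross: "(A *v u) \<bullet> (A *v h) = p"
        unfolding p_def g_def using sym_inner[OF sym, of "A *v u" h] by (simp add: inner_commute)
      have "f (u + t *\<^sub>R h) = M + 2 * t * p + t^2 * f h"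
        unfolding f_def M_def power2_norm_eq_inner using cross
        by (simp add: matrix_vector_right_distrib matrix_vector_mult_scaleR
            inner_add_left inner_add_right inner_commute power2_eq_square algebra_simps)
      moreover have "f (u + t *\<^sub>R h) \<le> M * (1 + t^2 * (norm h)^2)" using fle[OF xv] n by simp
      ultimately show ?thesis unfolding C_def by (simp add: algebra_simps)
    qed
    thus ?thesis using perturb_zero p_def by blast
  qed
  have Auv: "(A *v u) \<bullet> v = 0" using inv uv .
  have gv: "g \<bullet> v = 0" unfolding g_def using inv[OF Auv] .
  have gu: "g \<bullet> u = M"
    unfolding g_def M_def f_def using sym_inner[OF sym, of "A *v u" u]
    by (simp add: power2_norm_eq_inner)
  define h where "h = g - (g \<bullet> u) *\<^sub>R u"
  have hv: "h \<bullet> v = 0" unfolding h_def using gv uv by (simp add: inner_diff_left)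
  have hu: "h \<bullet> u = 0" unfolding h_def using uu by (simp add: inner_diff_left)
  have "h \<bullet> h = h \<bullet> g - (g \<bullet> u) * (h \<bullet> u)" unfolding h_def
    by (simp add: inner_diff_right algebra_simps)
  also have "\<dots> = 0" using hg[OF hv hu] hu by simp
  finally have "h = 0" by simp
  hence g_eq: "A *v (A *v u) = M *\<^sub>R u" using gu unfolding h_def g_def by simp
  have M0: "M \<ge> 0" unfolding M_def f_def by simp
  define s where "s = sqrt M"
  have ss: "s * s = M" unfolding s_def using M0 by simp
  have s0: "s \<ge> 0" unfolding s_def using M0 by simp
  have sK: "s \<le> K"
  proof (cases "A *v u + s *\<^sub>R u = 0")
    case True
    hence "A *v u = (-s) *\<^sub>R u" by (simp add: eq_neg_iff_add_eq_0 add.commute)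
    moreover have "u \<noteq> 0" using u1 by auto
    ultimately have "\<bar>-s\<bar> \<le> K" using H uv by blast
    thus ?thesis by simp
  next
    case False
    define y where "y = A *v u + s *\<^sub>R u"
    have "A *v y = M *\<^sub>R u + s *\<^sub>R (A *v u)"
      unfolding y_def using g_eq by (simp add: matrix_vector_right_distrib matrix_vector_mult_scaleR)
    also have "\<dots> = s *\<^sub>R y" unfolding y_def using ss by (simp add: algebra_simps)
    finally have "A *v y = s *\<^sub>R y" .
    moreover have "y \<bullet> v = 0" unfolding y_def using Auv uv by (simp add: inner_add_left)
    ultimately have "\<bar>s\<bar> \<le> K" using H False y_def by blast
    thus ?thesis by simp
  qed
  have MK: "M \<le> K^2" using mult_mono[OF sK sK K s0] ss by (simp add: power2_eq_square)
  have "(norm (A *v w))^2 \<le> M * (norm w)^2" using fle[OF w] unfolding f_def .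
  also have "\<dots> \<le> K^2 * (norm w)^2" using MK by (simp add: mult_right_mono)
  also have "\<dots> = (K * norm w)^2" by (simp add: power_mult_distrib)
  finally have "(norm (A *v w))^2 \<le> (K * norm w)^2" .
  thus ?thesis by (rule power2_le_imp_le) (use K in simp)
qed
theorem mainTheorem1:
  fixes A B :: "real^'n^'n" and l1 l2 m1 \<kappa> :: real and vA vB :: "real^'n"
  assumes "symmetric_matrix A" and "symmetric_matrix B"
    and "is_eigenvalue A l1"
    and "\<And>l. is_eigenvalue A l \<Longrightarrow> \<bar>l\<bar> \<le> \<bar>l1\<bar>"
    and "dim (eigenspace A l1) = 1"
    and "is_eigenvalue A l2" and "l2 \<noteq> l1"
    and "\<And>l. is_eigenvalue A l \<Longrightarrow> l \<noteq> l1 \<Longrightarrow> \<bar>l\<bar> \<le> \<bar>l2\<bar>"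
    and "is_eigenvalue B m1"
    and "\<And>m. is_eigenvalue B m \<Longrightarrow> \<bar>m\<bar> \<le> \<bar>m1\<bar>"
    and "0 \<le> \<kappa>" and "\<kappa> < 1"
    and "\<bar>l2\<bar> \<le> \<kappa> * \<bar>l1\<bar>"
    and "\<bar>m1\<bar> - spec_norm (A - B) \<ge> \<kappa> * \<bar>l1\<bar>"
    and "norm vA = 1" and "A *v vA = l1 *\<^sub>R vA"
    and "norm vB = 1" and "B *v vB = m1 *\<^sub>R vB"
    and "vA \<bullet> vB \<ge> 0"
  shows "(norm (vA - vB))\<^sup>2 \<le> 2 * (1 - (1 / \<bar>l1\<bar>) *
           sqrt (((\<bar>m1\<bar> - spec_norm (A - B))\<^sup>2 - l1\<^sup>2 * \<kappa>\<^sup>2) / (1 - \<kappa>\<^sup>2)))"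
proof -
  note a = assms
  have l2le: "\<bar>l2\<bar> \<le> \<bar>l1\<bar>" using a(4)[OF a(6)] .
  have l1nz: "l1 \<noteq> 0" using l2le a(7) by auto
  have vAvA: "vA \<bullet> vA = 1" using a(15) by (simp add: norm_eq_1)
  have vBvB: "vB \<bullet> vB = 1" using a(17) by (simp add: norm_eq_1)
  define K where "K = \<kappa> * \<bar>l1\<bar>"
  have K0: "K \<ge> 0" unfolding K_def using a(11) by simp
  have inv: "(A *v x) \<bullet> vA = 0" if "x \<bullet> vA = 0" for x
    using sym_inner[OF a(1), of x vA] a(16) that by simp
  have H: "\<bar>l\<bar> \<le> K" if y0: "y \<noteq> 0" and yv: "y \<bullet> vA = 0" and ye: "A *v y = l *\<^sub>R y" for y l
  proof -
    have ev: "is_eigenvalue A l" unfolding is_eigenvalue_def using y0 ye by blast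
    have "l \<noteq> l1"
    proof
      assume "l = l1"
      have vA0: "vA \<noteq> 0" using a(15) by auto
      have sub: "{y, vA} \<subseteq> eigenspace A l1" unfolding eigenspace_def using ye \<open>l = l1\<close> a(16) by auto
      have ind: "independent {y, vA}"
        by (rule pairwise_orthogonal_independent)
           (use y0 vA0 yv in \<open>auto simp: pairwise_def orthogonal_def inner_commute\<close>)
      have "y \<noteq> vA" using yv vAvA by auto
      hence "card {y, vA} = 2" by simp
      with independent_card_le_dim[OF sub ind] a(5) show False by simp
    qed
    hence "\<bar>l\<bar> \<le> \<bar>l2\<bar>" using a(8) ev by blast
    thus ?thesis using a(13) unfolding K_def by simp
  qed
  define c where "c = vA \<bullet> vB"
  define w where "w = vB - c *\<^sub>R vA"
  have wv: "w \<bullet> vA = 0" unfolding w_def c_def inner_diff_left inner_scaleR_left vAvA by (simp add: inner_commute)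
  have Aw: "norm (A *v w) \<le> K * norm w"
    by (rule restricted_bound[of A vA K w, OF a(1)]) (use inv H K0 wv in auto)
  have nw: "(norm w)^2 = 1 - c^2" unfolding power2_norm_eq_inner w_def c_def using vAvA vBvB
    by (simp add: inner_diff_left inner_diff_right inner_commute power2_eq_square algebra_simps)
  have AvB: "A *v vB = (c * l1) *\<^sub>R vA + A *v w"
    unfolding w_def using a(16) by (simp add: matrix_vector_mult_diff_distrib matrix_vector_mult_scaleR)
  have cr: "vA \<bullet> (A *v w) = 0" using inv[OF wv] by (simp add: inner_commute)
  have nAvB: "(norm (A *v vB))^2 = c^2 * l1^2 + (norm (A *v w))^2"
    unfolding AvB power2_norm_eq_inner using vAvA cr
    by (simp add: inner_add_left inner_add_right inner_commute power2_eq_square algebra_simps)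
  have Aw2: "(norm (A *v w))^2 \<le> K^2 * (1 - c^2)"
  proof -
    have "(norm (A *v w))^2 \<le> (K * norm w)^2" using Aw by (simp add: power_mono)
    thus ?thesis using nw by (simp add: power_mult_distrib)
  qed
  define \<eta> where "\<eta> = spec_norm (A - B)"
  have eta: "norm ((A - B) *v vB) \<le> \<eta>"
    using onorm[OF matrix_vector_mul_bounded_linear[of "A - B"], of vB] a(17)
    unfolding \<eta>_def spec_norm_def by simp
  have "\<bar>m1\<bar> = norm (B *v vB)" using a(18) a(17) by simp
  also have "B *v vB = A *v vB - (A - B) *v vB" by (simp add: matrix_vector_mult_diff_rdistrib)
  also have "norm \<dots> \<le> norm (A *v vB) + norm ((A - B) *v vB)" by (rule norm_triangle_ineq4)
  finally have m1le: "\<bar>m1\<bar> - \<eta> \<le> norm (A *v vB)" using eta by simp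
  define x where "x = \<bar>m1\<bar> - \<eta>"
  have xK: "x \<ge> K" unfolding x_def K_def \<eta>_def using a(14) by simp
  have x0: "x \<ge> 0" using xK K0 by simp
  have "x^2 \<le> (norm (A *v vB))^2" using m1le x0 unfolding x_def by (simp add: power_mono)
  hence x2: "x^2 \<le> c^2 * l1^2 + K^2 * (1 - c^2)" using nAvB Aw2 by simp
  define X where "X = x^2 - l1^2 * \<kappa>^2"
  have X0: "X \<ge> 0" unfolding X_def using xK K0 unfolding K_def
    by (metis abs_of_nonneg power_mono power_mult_distrib power2_abs diff_ge_0_iff_ge mult.commute)
  have k2: "1 - \<kappa>^2 > 0" using a(11) a(12) by (simp add: power_less_one_iff abs_if) 
  have "X \<le> c^2 * l1^2 * (1 - \<kappa>^2)" using x2 unfolding X_def K_def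
    by (simp add: power_mult_distrib algebra_simps)
  hence "X / (1 - \<kappa>^2) \<le> (c * \<bar>l1\<bar>)^2" using k2
    by (simp add: divide_le_eq power_mult_distrib)
  hence "sqrt (X / (1 - \<kappa>^2)) \<le> c * \<bar>l1\<bar>"
    using real_sqrt_le_mono[of "X / (1 - \<kappa>^2)" "(c * \<bar>l1\<bar>)^2"] a(19) unfolding c_def by simp
  hence le: "(1 / \<bar>l1\<bar>) * sqrt (X / (1 - \<kappa>^2)) \<le> c" using l1nz
    by (simp add: divide_le_eq mult.commute)
  have "(norm (vA - vB))^2 = 2 - 2 * c" unfolding power2_norm_eq_inner c_def using vAvA vBvB
    by (simp add: inner_diff_left inner_diff_right inner_commute)
  also have "\<dots> \<le> 2 * (1 - (1 / \<bar>l1\<bar>) * sqrt (X / (1 - \<kappa>^2)))" using le by simp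
  finally show ?thesis unfolding X_def x_def \<eta>_def .
qed

end
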